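(* Let $F$ be the elementary cellular automaton with rule number 78. For every nonempty finite word $u\in\{0,1\}^*$, the deterministic communication complexity of $\textsc{SInv}_{F,u}$ restricted to inputs of length $n$ is bounded by a constant independent of $n$.
   Context: An elementary cellular automaton (ECA) with rule number $N\in\{0,\dots,255\}$ is the map $F:\{0,1\}^{\mathbb Z}\to\{0,1\}^{\mathbb Z}$ given by $F(x)_i=f(x_{i-1},x_i,x_{i+1})$. Here the local rule $f:\{0,1\}^3\to\{0,1\}$ is determined by $N=\sum_{a,b,c\in\{0,1\}}2^{4a+2b+c}f(a,b,c)$. For a nonempty finite word $u$, $p_u\in\{0,1\}^{\mathbb Z}$ is defined by $(p_u)_i=u_{i\bmod |u|}$. For a finite word $x$, $p_u[x]$ is the configuration equal to $x$ on positions $0,\dots,|x|-1$ and to $p_u$ elsewhere. $\textsc{SInv}_{F,u}$ is the decision problem: on input a finite word $x$, decide whether there is an integer $w$ such that for all $t\ge0$ the set of positions where $F^t(p_u)$ and $F^t(p_u[x])$ differ is contained in an interval of length $w$. For each $n$, it is regarded as a function $\{0,1\}^n\to\{0,1\}$. For a function $g:X\times Y\to Z$, $D(g)$ is the minimal depth of a deterministic two-party protocol computing $g$. In such a protocol, Alice knows $x$ and Bob knows $y$. The protocol is a binary tree: each internal node is labelled by a function of Alice's input only or of Bob's input only, with values in $\{\text{left},\text{right}\}$, and each leaf is labelled by an output value. For $g:\{0,1\}^m\to Z$, set $D(g)=\max_{0\le i<m}D(g_i)$, where $g_i:\{0,1\}^i\times\{0,1\}^{m-i}\to Z$ is $g_i(x,y)=g(xy)$.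 *)

theory Defs
  imports Main
begin

type_synonym config = "int \<Rightarrow> bool"

definition eca_local :: "nat \<Rightarrow> bool \<Rightarrow> bool \<Rightarrow> bool \<Rightarrow> bool" where
  "eca_local N a b c = bit N (4 * of_bool a + 2 * of_bool b + of_bool c)"

definition eca :: "nat \<Rightarrow> config \<Rightarrow> config" where
  "eca N x = (\<lambda>i. eca_local N (x (i - 1)) (x i) (x (i + 1)))"

definition periodic :: "bool list \<Rightarrow> config" where
  "periodic u = (\<lambda>i. u ! nat (i mod int (length u)))"

definition patch :: "bool list \<Rightarrow> bool list \<Rightarrow> config" where
  "patch u x = (\<lambda>i. if 0 \<le> i \<and> i < int (length x) then x ! nat i else periodic u i)"

definition SInv :: "nat \<Rightarrow> bool list \<Rightarrow> bool list \<Rightarrow> bool" where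
  "SInv N u x = (\<exists>w::int. \<forall>t::nat. \<exists>a::int.
      {i. (eca N ^^ t) (periodic u) i \<noteq> (eca N ^^ t) (patch u x) i} \<subseteq> {a..a + w})"

datatype ('a, 'b, 'o) protocol =
    Leaf 'o
  | ANode "'a \<Rightarrow> bool" "('a, 'b, 'o) protocol" "('a, 'b, 'o) protocol"
  | BNode "'b \<Rightarrow> bool" "('a, 'b, 'o) protocol" "('a, 'b, 'o) protocol"

fun run :: "('a, 'b, 'o) protocol \<Rightarrow> 'a \<Rightarrow> 'b \<Rightarrow> 'o" where
  "run (Leaf z) x y = z"
| "run (ANode f l r) x y = (if f x then run l x y else run r x y)"
| "run (BNode f l r) x y = (if f y then run l x y else run r x y)"

fun depth :: "('a, 'b, 'o) protocol \<Rightarrow> nat" where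
  "depth (Leaf z) = 0"
| "depth (ANode f l r) = Suc (max (depth l) (depth r))"
| "depth (BNode f l r) = Suc (max (depth l) (depth r))"

definition computes :: "('a, 'b, 'o) protocol \<Rightarrow> ('a \<Rightarrow> 'b \<Rightarrow> 'o) \<Rightarrow> 'a set \<Rightarrow> 'b set \<Rightarrow> bool" where
  "computes P g X Y = (\<forall>x\<in>X. \<forall>y\<in>Y. run P x y = g x y)"

definition Dcc :: "('a \<Rightarrow> 'b \<Rightarrow> 'o) \<Rightarrow> 'a set \<Rightarrow> 'b set \<Rightarrow> nat" where
  "Dcc g X Y = (LEAST d. \<exists>P :: ('a, 'b, 'o) protocol. depth P = d \<and> computes P g X Y)"

definition Dword :: "(bool list \<Rightarrow> 'o) \<Rightarrow> nat \<Rightarrow> nat" where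
  "Dword g m = Max (insert 0 ((\<lambda>i. Dcc (\<lambda>x y. g (x @ y))
        {x. length x = i} {y. length y = m - i}) ` {..<m}))"

end

theory Submission
  imports Defs
begin

abbreviation F78 where "F78 \<equiv> eca 78"

lemma r78: "eca_local 78 a b c = (if a then b \<and> \<not> c else b \<or> c)"
  by (cases a; cases b; cases c) (simp_all add: eca_local_def bit_nat_def)

lemma F78_eq: "F78 x i = (if x (i - 1) then x i \<and> \<not> x (i + 1) else x i \<or> x (i + 1))"
  by (simp add: eca_def r78)

lemma wall: "c i \<Longrightarrow> \<not> c (i+1) \<Longrightarrow> F78 c i \<and> \<not> F78 c (i+1)"
  by (simp add: F78_eq)

lemma left_agree:
  assumes "\<forall>j\<le>i+1. c j = d j" "c i" "\<not> c (i+1)"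
  shows "\<forall>j\<le>i+1. F78 c j = F78 d j"
proof (intro allI impI)
  fix j assume j: "j \<le> i + 1"
  show "F78 c j = F78 d j"
  proof (cases "j = i + 1")
    case True
    then show ?thesis using assms wall[of c i] wall[of d i] by auto
  next
    case False
    then have "j - 1 \<le> i + 1" "j \<le> i+1" "j + 1 \<le> i + 1" using j by auto
    then show ?thesis using assms(1) by (simp add: F78_eq)
  qed
qed

lemma right_agree:
  assumes "\<forall>j\<ge>i. c j = d j" "c i" "\<not> c (i+1)"
  shows "\<forall>j\<ge>i. F78 c j = F78 d j"
proof (intro allI impI)
  fix j assume j: "j \<ge> i"
  show "F78 c j = F78 d j"
  proof (cases "j = i")
    case True
    then show ?thesis using assms wall[of c i] wall[of d i] by auto
  next
    case False
    then have "j - 1 \<ge> i" "j \<ge> i" "j + 1 \<ge> i" using j by auto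
    then show ?thesis using assms(1) by (simp add: F78_eq)
  qed
qed

lemma left_agree_t:
  assumes "\<forall>j\<le>i+1. c j = d j" "c i" "\<not> c (i+1)"
  shows "(F78 ^^ t) c i \<and> \<not> (F78 ^^ t) c (i+1) \<and> (\<forall>j\<le>i+1. (F78 ^^ t) c j = (F78 ^^ t) d j)"
proof (induction t)
  case 0
  then show ?case using assms by simp
next
  case (Suc t)
  then show ?case using wall[of "(F78 ^^ t) c" i] left_agree[of i "(F78 ^^ t) c" "(F78 ^^ t) d"]
    by simp
qed

lemma right_agree_t:
  assumes "\<forall>j\<ge>i. c j = d j" "c i" "\<not> c (i+1)"
  shows "(F78 ^^ t) c i \<and> \<not> (F78 ^^ t) c (i+1) \<and> (\<forall>j\<ge>i. (F78 ^^ t) c j = (F78 ^^ t) d j)"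
proof (induction t)
  case 0
  then show ?case using assms by simp
next
  case (Suc t)
  then show ?case using wall[of "(F78 ^^ t) c" i] right_agree[of i "(F78 ^^ t) c" "(F78 ^^ t) d"]
    by simp
qed

lemma per_shift: "u \<noteq> [] \<Longrightarrow> periodic u (i + int (length u) * m) = periodic u i"
  by (simp add: periodic_def)

lemma per_k: "k < length u \<Longrightarrow> periodic u (int k) = u ! k"
  by (simp add: periodic_def)

lemma per_k1: "k < length u \<Longrightarrow> periodic u (int k + 1) = u ! ((k+1) mod length u)"
proof -
  assume "k < length u"
  have "(int k + 1) mod int (length u) = int ((k+1) mod length u)"
    by (simp add: of_nat_mod add.commute)
  then show ?thesis by (simp add: periodic_def)
qed

lemma exists_10:
  assumes "u \<noteq> []" "a < length u" "u ! a" "b < length u" "\<not> u ! b"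
  shows "\<exists>k<length u. u ! k \<and> \<not> u ! ((k+1) mod length u)"
proof (rule ccontr)
  assume "\<not> ?thesis"
  then have H: "\<And>k. k < length u \<Longrightarrow> u ! k \<Longrightarrow> u ! ((k+1) mod length u)" by blast
  have "u ! ((a + n) mod length u)" for n
  proof (induction n)
    case 0 then show ?case using assms by simp
  next
    case (Suc n)
    have "u ! (((a + n) mod length u + 1) mod length u)"
      using H[of "(a+n) mod length u"] Suc assms(1) by simp
    moreover have "((a + n) mod length u + 1) mod length u = (a + Suc n) mod length u"
      by (simp add: mod_Suc_eq)
    ultimately show ?case by simp
  qed
  from this[of "b + length u - a"] have "u ! ((b + length u) mod length u)"
    using assms by simp
  then show False using assms by simp
qed

lemma nonconst_sinv:
  assumes "u \<noteq> []" "k < length u" "u ! k" "\<not> u ! ((k+1) mod length u)"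
  shows "SInv 78 u x"
proof -
  let ?p = "int (length u)"
  define i where "i = int k + ?p * (-2)"
  define j where "j = int k + ?p * int (length x)"
  have pi: "periodic u i" using per_shift[OF assms(1), of "int k" "-2"] per_k[OF assms(2)] assms(3)
    by (simp add: i_def)
  have pi1: "\<not> periodic u (i+1)" using per_shift[OF assms(1), of "int k + 1" "-2"] per_k1[OF assms(2)] assms(4)
    by (simp add: i_def algebra_simps)
  have pj: "periodic u j" using per_shift[OF assms(1), of "int k" "int (length x)"] per_k[OF assms(2)] assms(3)
    by (simp add: j_def)
  have pj1: "\<not> periodic u (j+1)" using per_shift[OF assms(1), of "int k + 1" "int (length x)"] per_k1[OF assms(2)] assms(4)
    by (simp add: j_def algebra_simps)
  have ilt: "i + 1 < 0" using assms(2) by (simp add: i_def)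
  have "?p * int (length x) \<ge> int (length x)" using assms(1)
    by (simp add: mult_le_cancel_right1 Suc_le_eq) 
  then have jge: "j \<ge> int (length x)" by (simp add: j_def)
  have A0: "\<forall>l\<le>i+1. periodic u l = patch u x l" using ilt by (simp add: patch_def)
  have B0: "\<forall>l\<ge>j. periodic u l = patch u x l" using jge by (simp add: patch_def)
  show ?thesis unfolding SInv_def
  proof (intro exI allI)
    fix t
    have A: "\<forall>l\<le>i+1. (F78 ^^ t) (periodic u) l = (F78 ^^ t) (patch u x) l"
      using left_agree_t[OF A0 pi pi1] by blast
    have B: "\<forall>l\<ge>j. (F78 ^^ t) (periodic u) l = (F78 ^^ t) (patch u x) l"
      using right_agree_t[OF B0 pj pj1] by blast
    show "{l. (F78 ^^ t) (periodic u) l \<noteq> (F78 ^^ t) (patch u x) l} \<subseteq> {i..i + (j - i)}"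
    proof
      fix l assume "l \<in> {l. (F78 ^^ t) (periodic u) l \<noteq> (F78 ^^ t) (patch u x) l}"
      then have "\<not> l \<le> i + 1" "\<not> l \<ge> j" using A B by auto
      then show "l \<in> {i..i + (j - i)}" by simp
    qed
  qed
qed

lemma grow_t:
  assumes "\<forall>l<L. \<not> e l" "e L" "\<forall>l>R. \<not> e l" "e R"
  shows "(\<forall>l<L - int t. \<not> (F78 ^^ t) e l) \<and> (F78 ^^ t) e (L - int t)
       \<and> (\<forall>l>R. \<not> (F78 ^^ t) e l) \<and> (F78 ^^ t) e R"
proof (induction t)
  case 0
  then show ?case using assms by simp
next
  case (Suc t)
  let ?e = "(F78 ^^ t) e"
  have h1: "\<forall>l<L - int t. \<not> ?e l" "?e (L - int t)" "\<forall>l>R. \<not> ?e l" "?e R" using Suc by auto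
  have a: "\<forall>l<L - int (Suc t). \<not> F78 ?e l"
  proof (intro allI impI)
    fix l assume "l < L - int (Suc t)"
    then have "l - 1 < L - int t" "l < L - int t" "l + 1 < L - int t" by auto
    then show "\<not> F78 ?e l" using h1(1) by (simp add: F78_eq)
  qed
  have b: "F78 ?e (L - int (Suc t))"
  proof -
    have "L - int (Suc t) - 1 < L - int t" "L - int (Suc t) < L - int t" "L - int (Suc t) + 1 = L - int t" by auto
    then show ?thesis using h1(1,2) by (simp add: F78_eq)
  qed
  have c: "\<forall>l>R. \<not> F78 ?e l"
  proof (intro allI impI)
    fix l assume "l > R"
    then have "l > R" "l + 1 > R" by auto
    then show "\<not> F78 ?e l" using h1(3) by (simp add: F78_eq)
  qed
  have d: "F78 ?e R" using h1(3,4) by (simp add: F78_eq)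
  show ?case using a b c d by simp
qed

lemma F78_zero: "F78 (\<lambda>_. False) = (\<lambda>_. False)"
  by (rule ext) (simp add: F78_eq)

lemma F78_zero_t: "(F78 ^^ t) (\<lambda>_. False) = (\<lambda>_. False)"
  by (induction t) (simp_all add: F78_zero)

lemma grow_not:
  assumes "\<forall>l<L. \<not> e l" "e L" "\<forall>l>R. \<not> e l" "e R"
  shows "\<not> (\<exists>w::int. \<forall>t::nat. \<exists>a::int.
      {i. (F78 ^^ t) (\<lambda>_. False) i \<noteq> (F78 ^^ t) e i} \<subseteq> {a..a + w})"
proof
  assume "\<exists>w::int. \<forall>t::nat. \<exists>a::int.
      {i. (F78 ^^ t) (\<lambda>_. False) i \<noteq> (F78 ^^ t) e i} \<subseteq> {a..a + w}"
  then obtain w where W: "\<forall>t::nat. \<exists>a::int.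
      {i. (F78 ^^ t) (\<lambda>_. False) i \<noteq> (F78 ^^ t) e i} \<subseteq> {a..a + w}" by blast
  have LR: "L \<le> R" using assms(2,3) by (meson not_le)
  define t where "t = nat w + 1"
  obtain a where a: "{i. (F78 ^^ t) (\<lambda>_. False) i \<noteq> (F78 ^^ t) e i} \<subseteq> {a..a + w}"
    using W by blast
  have g: "(F78 ^^ t) e (L - int t)" "(F78 ^^ t) e R" using grow_t[OF assms, of t] by auto
  have "L - int t \<in> {a..a+w}" "R \<in> {a..a+w}" using a g by (auto simp: F78_zero_t)
  then show False using LR by (simp add: t_def)
qed

lemma finite_ends:
  fixes e :: config
  assumes "finite {l. e l}" "e l0"
  shows "\<exists>L R. (\<forall>l<L. \<not> e l) \<and> e L \<and> (\<forall>l>R. \<not> e l) \<and> e R"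
proof -
  let ?S = "{l. e l}"
  have ne: "?S \<noteq> {}" using assms by auto
  have "\<forall>l<Min ?S. \<not> e l" using Min_le[OF assms(1)] by force
  moreover have "e (Min ?S)" using Min_in[OF assms(1) ne] by simp
  moreover have "\<forall>l>Max ?S. \<not> e l" using Max_ge[OF assms(1)] by force
  moreover have "e (Max ?S)" using Max_in[OF assms(1) ne] by simp
  ultimately show ?thesis by blast
qed

lemma periodic_const: "u \<noteq> [] \<Longrightarrow> \<forall>a\<in>set u. a = c \<Longrightarrow> periodic u = (\<lambda>_. c)"
proof (rule ext)
  fix i assume "u \<noteq> []" "\<forall>a\<in>set u. a = c"
  moreover have "nat (i mod int (length u)) < length u" using \<open>u \<noteq> []\<close>
    by (simp add: nat_less_iff)
  ultimately show "periodic u i = c" unfolding periodic_def using nth_mem by blast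
qed

lemma patch_out: "j < 0 \<or> j \<ge> int (length x) \<Longrightarrow> patch u x j = periodic u j"
  by (auto simp: patch_def)

lemma fin_true:
  assumes PT: "periodic u = (\<lambda>_. True)"
  shows "finite {l. F78 (patch u x) l}"
proof (rule finite_subset)
  show "{l. F78 (patch u x) l} \<subseteq> {-1..int (length x)}"
  proof
    fix l assume "l \<in> {l. F78 (patch u x) l}"
    then have el: "F78 (patch u x) l" by simp
    show "l \<in> {-1..int (length x)}"
    proof (rule ccontr)
      assume "l \<notin> {-1..int (length x)}"
      then have o: "l - 1 < 0 \<or> l - 1 \<ge> int (length x)" "l < 0 \<or> l \<ge> int (length x)"
          "l + 1 < 0 \<or> l + 1 \<ge> int (length x)" by auto
      have "patch u x (l-1)" "patch u x l" "patch u x (l+1)"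
        using patch_out[OF o(1)] patch_out[OF o(2)] patch_out[OF o(3)] PT by simp_all
      then show False using el by (simp add: F78_eq)
    qed
  qed
qed simp

lemma one_true:
  assumes PT: "periodic u = (\<lambda>_. True)" and k: "k < length x" "\<not> x ! k"
  shows "\<exists>l. F78 (patch u x) l"
proof -
  let ?S = "{k. k < length x \<and> \<not> x ! k}"
  have finS: "finite ?S" by simp
  have neS: "?S \<noteq> {}" using k by blast
  define m where "m = Max ?S"
  have "m \<in> ?S" unfolding m_def using Max_in[OF finS neS] .
  then have mS: "m < length x" "\<not> x ! m" by auto
  have mmax: "\<And>k. k < length x \<Longrightarrow> \<not> x ! k \<Longrightarrow> k \<le> m" unfolding m_def
    using Max_ge[OF finS] by blast
  have p1: "\<not> patch u x (int m)" using mS by (simp add: patch_def)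
  have p2: "patch u x (int m + 1)"
  proof (cases "m + 1 < length x")
    case True
    then have "x ! (m+1)" using mmax[of "m+1"] by fastforce
    moreover have "nat (int m + 1) = m + 1" by simp
    ultimately show ?thesis using True by (simp add: patch_def)
  next
    case False
    then have "int m + 1 \<ge> int (length x)" by simp
    then show ?thesis using patch_out[of "int m + 1" x u] PT by simp
  qed
  have "F78 (patch u x) (int m + 1)" using p1 p2 by (simp add: F78_eq)
  then show ?thesis by blast
qed

lemma const_sinv:
  assumes "u \<noteq> []" "\<forall>a\<in>set u. a = c"
  shows "SInv 78 u x = (\<forall>a\<in>set x. a = c)"
proof
  assume X: "\<forall>a\<in>set x. a = c"
  have PC: "periodic u = (\<lambda>_. c)" using periodic_const[OF assms] .
  have "patch u x = periodic u"
  proof (rule ext)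
    fix i
    show "patch u x i = periodic u i"
    proof (cases "0 \<le> i \<and> i < int (length x)")
      case True
      then have "nat i < length x" by auto
      then have "x ! nat i \<in> set x" by (rule nth_mem)
      then show ?thesis using True X PC by (simp add: patch_def)
    next
      case False
      then show ?thesis unfolding patch_def by presburger
    qed
  qed
  then have "\<forall>t. {i. (F78 ^^ t) (periodic u) i \<noteq> (F78 ^^ t) (patch u x) i} \<subseteq> {0..0+0}"
    by simp
  then show "SInv 78 u x" unfolding SInv_def by blast
next
  assume S: "SInv 78 u x"
  show "\<forall>a\<in>set x. a = c"
  proof (rule ccontr)
    assume "\<not> (\<forall>a\<in>set x. a = c)"
    then obtain a where a: "a \<in> set x" "a \<noteq> c" by blast
    from a(1) obtain k where k0: "k < length x" "x ! k = a" unfolding in_set_conv_nth by blast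
    have k: "k < length x" "x ! k \<noteq> c" using k0 a(2) by simp_all
    have P: "periodic u = (\<lambda>_. c)" using periodic_const[OF assms] .
    show False
    proof (cases c)
      case False
      let ?e = "patch u x"
      have "{l. ?e l} \<subseteq> {0..<int (length x)}"
      proof
        fix l assume "l \<in> {l. ?e l}"
        then show "l \<in> {0..<int (length x)}"
          by (cases "0 \<le> l \<and> l < int (length x)") (simp_all add: patch_def P False)
      qed
      then have fin: "finite {l. ?e l}" by (rule finite_subset) simp
      have "?e (int k)" using k False by (simp add: patch_def)
      from finite_ends[OF fin this] obtain L R where "(\<forall>l<L. \<not> ?e l) \<and> ?e L \<and> (\<forall>l>R. \<not> ?e l) \<and> ?e R"
        by blast
      then have G: "\<not> (\<exists>w::int. \<forall>t::nat. \<exists>a::int.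
          {i. (F78 ^^ t) (\<lambda>_. False) i \<noteq> (F78 ^^ t) ?e i} \<subseteq> {a..a + w})"
        by (intro grow_not[of L _ R]) simp_all
      have P': "periodic u = (\<lambda>_. False)" using P False by simp
      have "\<exists>w::int. \<forall>t::nat. \<exists>a::int.
          {i. (F78 ^^ t) (\<lambda>_. False) i \<noteq> (F78 ^^ t) ?e i} \<subseteq> {a..a + w}"
        using S unfolding SInv_def P' .
      then show False using G by contradiction
    next
      case True
      let ?e = "F78 (patch u x)"
      have PT: "periodic u = (\<lambda>_. True)" using P True by simp
      have fin: "finite {l. ?e l}" by (rule fin_true[OF PT])
      obtain l0 where "?e l0" using one_true[OF PT k(1)] k(2) True by blast
      from finite_ends[OF fin this] obtain L R where LR: "(\<forall>l<L. \<not> ?e l) \<and> ?e L \<and> (\<forall>l>R. \<not> ?e l) \<and> ?e R"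
        by blast
      have "\<exists>w::int. \<forall>t::nat. \<exists>a::int.
          {i. (F78 ^^ t) (\<lambda>_. False) i \<noteq> (F78 ^^ t) ?e i} \<subseteq> {a..a + w}"
      proof -
        obtain w where W: "\<forall>t::nat. \<exists>a::int.
          {i. (F78 ^^ t) (periodic u) i \<noteq> (F78 ^^ t) (patch u x) i} \<subseteq> {a..a + w}"
          using S unfolding SInv_def by blast
        have Z: "F78 (periodic u) = (\<lambda>_. False)" by (rule ext) (simp add: F78_eq P True)
        have eq: "(F78 ^^ Suc t) (periodic u) = (F78 ^^ t) (\<lambda>_. False)" for t
          by (simp only: funpow_Suc_right comp_apply Z)
        have eq2: "(F78 ^^ Suc t) (patch u x) = (F78 ^^ t) ?e" for t
          by (simp only: funpow_Suc_right comp_apply)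
        show ?thesis
        proof (rule exI[of _ w], rule allI)
          fix t
          show "\<exists>a. {i. (F78 ^^ t) (\<lambda>_. False) i \<noteq> (F78 ^^ t) ?e i} \<subseteq> {a..a + w}"
            using W[rule_format, of "Suc t"] unfolding eq eq2 .
        qed
      qed
      moreover have "\<not> (\<exists>w::int. \<forall>t::nat. \<exists>a::int.
          {i. (F78 ^^ t) (\<lambda>_. False) i \<noteq> (F78 ^^ t) ?e i} \<subseteq> {a..a + w})"
        using LR by (intro grow_not[of L _ R]) simp_all
      ultimately show False by contradiction
    qed
  qed
qed

lemma sinv_char:
  assumes "u \<noteq> []"
  shows "\<exists>A B. \<forall>x y. SInv 78 u (x @ y) = (A x \<and> B y)"
proof (cases "\<exists>c. \<forall>a\<in>set u. a = c")
  case True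
  then obtain c where c: "\<forall>a\<in>set u. a = c" by blast
  show ?thesis
    by (rule exI[of _ "\<lambda>x. \<forall>a\<in>set x. a = c"], rule exI[of _ "\<lambda>x. \<forall>a\<in>set x. a = c"])
      (auto simp: const_sinv[OF assms c])
next
  case False
  then obtain a b where ab: "a < length u" "u ! a" "b < length u" "\<not> u ! b"
    by (metis (full_types) in_set_conv_nth)
  obtain k where "k<length u" "u ! k" "\<not> u ! ((k+1) mod length u)"
    using exists_10[OF assms ab] by blast
  then show ?thesis using nonconst_sinv[OF assms] by blast
qed

lemma dcc_le:
  assumes "\<forall>x\<in>X. \<forall>y\<in>Y. g x y = (A x \<and> B y)"
  shows "Dcc g X Y \<le> 2"
proof -
  let ?P = "ANode A (BNode B (Leaf True) (Leaf False)) (Leaf False) :: ('a, 'b, bool) protocol"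
  have "depth ?P = 2 \<and> computes ?P g X Y" using assms by (simp add: computes_def)
  then show ?thesis unfolding Dcc_def by (intro Least_le) blast
qed

theorem mainTheorem7:
  fixes u :: "bool list"
  assumes "u \<noteq> []"
  shows "\<exists>C::nat. \<forall>n::nat. Dword (SInv 78 u) n \<le> C"
proof -
  obtain A B where AB: "\<forall>x y. SInv 78 u (x @ y) = (A x \<and> B y)" using sinv_char[OF assms] by blast
  show ?thesis
  proof (intro exI allI)
    fix n
    show "Dword (SInv 78 u) n \<le> 2" unfolding Dword_def
      using dcc_le[of _ _ "\<lambda>x y. SInv 78 u (x @ y)" A B] AB by (simp add: Max_le_iff)
  qed
qed

end
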